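(* For all natural numbers $m$ and $n$, every vertex of the polytope $\operatorname{Hom}(\Box_m,\triangle_n)$ has rank $0$ or $1$; that is, $$\operatorname{vert}(\Box_m,\triangle_n)=\operatorname{vert}^{(0)}(\Box_m,\triangle_n)\cup\operatorname{vert}^{(1)}(\Box_m,\triangle_n).$$
   Context: For convex polytopes $P,Q$ (in real finite-dimensional vector spaces), $\operatorname{Hom}(P,Q)$ denotes the set of maps $P\to Q$ that are restrictions of affine maps $\operatorname{Aff}(P)\to\operatorname{Aff}(Q)$ between the affine hulls; viewed as a subset of the real affine space of all affine maps $\operatorname{Aff}(P)\to\operatorname{Aff}(Q)$, it is a convex polytope. $\operatorname{vert}(P,Q)$ denotes its set of vertices (called vertex maps). The rank of $f\in\operatorname{Hom}(P,Q)$ is $\dim\operatorname{Aff}(f(P))$, and $\operatorname{vert}^{(k)}(P,Q)$ is the set of vertex maps of rank $k$. $\triangle_n=\operatorname{conv}(0,e_1,\ldots,e_n)\subset\mathbb{R}^n$ and $\Box_m=\operatorname{conv}\{(a_1,\ldots,a_m): a_i=\pm1\}\subset\mathbb{R}^m$, where $e_i$ are standard basis vectors. *)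

theory Defs
  imports Complex_Main
begin

text \<open>Real n-space R^n is modelled as the functions x :: nat => real with
  x i = 0 for all i >= n (coordinates are indexed 0..n-1).\<close>

definition rvec :: "nat \<Rightarrow> (nat \<Rightarrow> real) set" where
  "rvec n = {x. \<forall>i\<ge>n. x i = 0}"

definition cvx_hull :: "(nat \<Rightarrow> real) set \<Rightarrow> (nat \<Rightarrow> real) set" where
  "cvx_hull V = {x. \<exists>S u. finite S \<and> S \<subseteq> V \<and> (\<forall>v\<in>S. 0 \<le> u v) \<and> sum u S = 1
                    \<and> x = (\<lambda>i. \<Sum>v\<in>S. u v * v i)}"

definition cube :: "nat \<Rightarrow> (nat \<Rightarrow> real) set" where
  "cube m = cvx_hull {x \<in> rvec m. \<forall>i<m. x i = 1 \<or> x i = -1}"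

definition unit_vec :: "nat \<Rightarrow> nat \<Rightarrow> real" where
  "unit_vec i = (\<lambda>j. if j = i then 1 else 0)"

definition simplex :: "nat \<Rightarrow> (nat \<Rightarrow> real) set" where
  "simplex n = cvx_hull (insert (\<lambda>_. 0) (unit_vec ` {..<n}))"

text \<open>Affine maps R^m -> R^n (the affine hulls of the cube and the simplex),
  represented as functions that are 0 outside R^m, so that equality of such
  functions is equality of affine maps; the affine space structure is pointwise.\<close>

definition affine_map :: "nat \<Rightarrow> nat \<Rightarrow> ((nat \<Rightarrow> real) \<Rightarrow> (nat \<Rightarrow> real)) \<Rightarrow> bool" where
  "affine_map m n F \<longleftrightarrow>
     (\<forall>x\<in>rvec m. F x \<in> rvec n) \<and> (\<forall>x. x \<notin> rvec m \<longrightarrow> F x = (\<lambda>_. 0)) \<and>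
     (\<forall>x\<in>rvec m. \<forall>y\<in>rvec m. \<forall>t::real.
        F (\<lambda>i. (1 - t) * x i + t * y i) = (\<lambda>i. (1 - t) * F x i + t * F y i))"

definition Hom :: "nat \<Rightarrow> nat \<Rightarrow> (nat \<Rightarrow> real) set \<Rightarrow> (nat \<Rightarrow> real) set
                   \<Rightarrow> ((nat \<Rightarrow> real) \<Rightarrow> (nat \<Rightarrow> real)) set" where
  "Hom m n P Q = {F. affine_map m n F \<and> F ` P \<subseteq> Q}"

definition vert :: "((nat \<Rightarrow> real) \<Rightarrow> (nat \<Rightarrow> real)) set
                    \<Rightarrow> ((nat \<Rightarrow> real) \<Rightarrow> (nat \<Rightarrow> real)) set" where
  "vert H = {F \<in> H. \<not> (\<exists>G\<in>H. \<exists>K\<in>H. \<exists>u::real. G \<noteq> K \<and> 0 < u \<and> u < 1 \<and>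
                          F = (\<lambda>x i. (1 - u) * G x i + u * K x i))}"

definition aff_indep :: "nat \<Rightarrow> (nat \<Rightarrow> nat \<Rightarrow> real) \<Rightarrow> bool" where
  "aff_indep k p \<longleftrightarrow>
     (\<forall>c::nat \<Rightarrow> real. (\<Sum>j\<le>k. c j) = 0 \<and> (\<lambda>i. \<Sum>j\<le>k. c j * p j i) = (\<lambda>_. 0)
        \<longrightarrow> (\<forall>j\<le>k. c j = 0))"

definition aff_dimension :: "(nat \<Rightarrow> real) set \<Rightarrow> nat" where
  "aff_dimension S = (GREATEST k. \<exists>p. (\<forall>j\<le>k. p j \<in> S) \<and> aff_indep k p)"

definition map_rank :: "(nat \<Rightarrow> real) set \<Rightarrow> ((nat \<Rightarrow> real) \<Rightarrow> (nat \<Rightarrow> real)) \<Rightarrow> nat" where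
  "map_rank P F = aff_dimension (F ` P)"

end

theory Submission
  imports Defs
begin

definition zv :: "nat \<Rightarrow> real" where "zv = (\<lambda>_. 0)"
definition coef :: "((nat\<Rightarrow>real)\<Rightarrow>(nat\<Rightarrow>real)) \<Rightarrow> nat \<Rightarrow> nat \<Rightarrow> real" where
  "coef F i j = F (unit_vec i) j - F zv j"

lemma zv_rvec[simp]: "zv \<in> rvec m" by (simp add: rvec_def zv_def)

lemma unit_rvec: "i < m \<Longrightarrow> unit_vec i \<in> rvec m" by (simp add: rvec_def unit_vec_def)

lemma rvec_mono: "k \<le> m \<Longrightarrow> x \<in> rvec k \<Longrightarrow> x \<in> rvec m" by (simp add: rvec_def)

lemma aff_comb:
  assumes "affine_map m n F" "x \<in> rvec m" "y \<in> rvec m"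
  shows "F (\<lambda>i. (1 - t) * x i + t * y i) = (\<lambda>i. (1 - t) * F x i + t * F y i)"
proof -
  have "\<forall>x\<in>rvec m. \<forall>y\<in>rvec m. \<forall>t::real. F (\<lambda>i. (1 - t) * x i + t * y i) = (\<lambda>i. (1 - t) * F x i + t * F y i)"
    using assms(1) unfolding affine_map_def by (rule conjunct2[THEN conjunct2])
  then show ?thesis using assms(2,3) by blast
qed

lemma aff_in: "affine_map m n F \<Longrightarrow> x \<in> rvec m \<Longrightarrow> F x \<in> rvec n"
  unfolding affine_map_def by blast

lemma aff_out: "affine_map m n F \<Longrightarrow> x \<notin> rvec m \<Longrightarrow> F x = (\<lambda>_. 0)"
  unfolding affine_map_def by blast

lemma aff_scale:
  assumes "affine_map m n F" "x \<in> rvec m"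
  shows "F (\<lambda>i. t * x i) = (\<lambda>j. (1-t) * F zv j + t * F x j)"
proof -
  have "F (\<lambda>i. (1-t) * zv i + t * x i) = (\<lambda>j. (1-t) * F zv j + t * F x j)"
    by (rule aff_comb[OF assms(1) zv_rvec assms(2)])
  then show ?thesis by (simp add: zv_def)
qed

lemma aff_add:
  assumes "affine_map m n F" "x \<in> rvec m" "y \<in> rvec m"
  shows "F (\<lambda>i. x i + y i) = (\<lambda>j. F x j + F y j - F zv j)"
proof -
  define w where "w = (\<lambda>i. (1 - 1/2) * x i + (1/2::real) * y i)"
  have w: "F w = (\<lambda>j. (1 - 1/2) * F x j + (1/2) * F y j)"
    unfolding w_def by (rule aff_comb[OF assms])
  have wr: "w \<in> rvec m" using assms by (simp add: rvec_def w_def)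
  have "(\<lambda>i. x i + y i) = (\<lambda>i. 2 * w i)" by (auto simp: w_def)
  then have "F (\<lambda>i. x i + y i) = (\<lambda>j. (1-2) * F zv j + 2 * F w j)"
    using aff_scale[OF assms(1) wr] by simp
  then show ?thesis using w by auto
qed

lemma aff_rep_k:
  assumes "affine_map m n F" "k \<le> m" "x \<in> rvec k"
  shows "F x = (\<lambda>j. F zv j + (\<Sum>i<k. x i * coef F i j))"
  using assms(2,3)
proof (induction k arbitrary: x)
  case 0
  then have "x = zv" by (intro ext) (simp add: rvec_def zv_def)
  then show ?case by simp
next
  case (Suc k)
  define x' where "x' = x(k := 0)"
  define y where "y = (\<lambda>i. x k * unit_vec k i)"
  have x'r: "x' \<in> rvec k" using Suc.prems by (auto simp: rvec_def x'_def)
  have x'm: "x' \<in> rvec m" using Suc.prems(1) by (intro rvec_mono[OF _ x'r]) simp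
  have km: "k < m" using Suc.prems by simp
  have ym: "y \<in> rvec m" using km by (simp add: rvec_def y_def unit_vec_def)
  have xe: "x = (\<lambda>i. x' i + y i)" by (intro ext) (simp add: x'_def y_def unit_vec_def)
  have Fy: "F y = (\<lambda>j. (1 - x k) * F zv j + x k * F (unit_vec k) j)"
    unfolding y_def by (rule aff_scale[OF assms(1) unit_rvec[OF km]])
  have Fx': "F x' = (\<lambda>j. F zv j + (\<Sum>i<k. x i * coef F i j))"
  proof -
    have "F x' = (\<lambda>j. F zv j + (\<Sum>i<k. x' i * coef F i j))" using Suc.IH[OF _ x'r] Suc.prems(1) by simp
    moreover have "(\<Sum>i<k. x' i * coef F i j) = (\<Sum>i<k. x i * coef F i j)" for j
      by (rule sum.cong) (auto simp: x'_def)
    ultimately show ?thesis by simp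
  qed
  have "F x = (\<lambda>j. F x' j + F y j - F zv j)" using aff_add[OF assms(1) x'm ym] by (subst xe)
  then show ?case using Fx' Fy by (intro ext) (simp add: coef_def algebra_simps)
qed

lemma aff_rep:
  assumes "affine_map m n F" "x \<in> rvec m"
  shows "F x = (\<lambda>j. F zv j + (\<Sum>i<m. x i * coef F i j))"
  using aff_rep_k[OF assms(1) order_refl assms(2)] .

lemma coef_out:
  assumes "affine_map m n F" "i < m" "n \<le> j"
  shows "coef F i j = 0"
proof -
  have "F (unit_vec i) \<in> rvec n" "F zv \<in> rvec n"
    using assms(1) unit_rvec[OF assms(2)] zv_rvec unfolding affine_map_def by blast+
  then show ?thesis using assms(3) by (simp add: coef_def rvec_def)
qed

lemma cube_mem:
  assumes "x \<in> cube m" shows "x \<in> rvec m" "\<And>i. \<bar>x i\<bar> \<le> 1"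
proof -
  obtain S u where S: "finite S" "S \<subseteq> {x \<in> rvec m. \<forall>i<m. x i = 1 \<or> x i = -1}"
    "\<forall>v\<in>S. 0 \<le> u v" "sum u S = 1" "x = (\<lambda>i. \<Sum>v\<in>S. u v * v i)"
    using assms unfolding cube_def cvx_hull_def by blast
  have vb: "\<bar>v i\<bar> \<le> 1" if "v \<in> S" for v i
  proof -
    have "v \<in> rvec m" "\<forall>i<m. v i = 1 \<or> v i = -1" using S(2) that by blast+
    then show ?thesis by (cases "i < m") (auto simp: rvec_def)
  qed
  have vz: "v i = 0" if "v \<in> S" "m \<le> i" for v i
  proof -
    have "v \<in> rvec m" using S(2) that(1) by blast
    then show ?thesis using that(2) by (simp add: rvec_def)
  qed
  show "x \<in> rvec m" using S(5) vz by (simp add: rvec_def sum.neutral)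
  fix i
  have "\<bar>x i\<bar> \<le> (\<Sum>v\<in>S. \<bar>u v * v i\<bar>)" using S(5) sum_abs by simp
  also have "\<dots> \<le> (\<Sum>v\<in>S. u v)"
    by (rule sum_mono) (use S(3) vb in \<open>auto simp: abs_mult intro: mult_left_le\<close>)
  finally show "\<bar>x i\<bar> \<le> 1" using S(4) by simp
qed

lemma cube_vert:
  assumes "v \<in> rvec m" "\<forall>i<m. v i = 1 \<or> v i = -1" shows "v \<in> cube m"
  unfolding cube_def cvx_hull_def
  by (rule CollectI, rule exI[of _ "{v}"], rule exI[of _ "\<lambda>_. 1"]) (use assms in auto)

lemma simplex_D:
  assumes "y \<in> simplex n" shows "\<And>j. 0 \<le> y j" "(\<Sum>j<n. y j) \<le> 1"
proof -
  obtain S u where S: "finite S" "S \<subseteq> insert (\<lambda>_. 0) (unit_vec ` {..<n})"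
    "\<forall>v\<in>S. 0 \<le> u v" "sum u S = 1" "y = (\<lambda>i. \<Sum>v\<in>S. u v * v i)"
    using assms unfolding simplex_def cvx_hull_def by blast
  have vnn: "0 \<le> v i" "(\<Sum>j<n. v j) \<le> 1" if "v \<in> S" for v i
    using S(2) that by (auto simp: unit_vec_def)
  fix j show "0 \<le> y j" using S(3,5) vnn by (auto intro!: sum_nonneg)
  have "(\<Sum>j<n. y j) = (\<Sum>v\<in>S. u v * (\<Sum>j<n. v j))"
    using S(5) by (simp add: sum_distrib_left sum.swap[of _ S])
  also have "\<dots> \<le> (\<Sum>v\<in>S. u v)"
    by (rule sum_mono) (use S(3) vnn in \<open>auto intro: mult_left_le\<close>)
  finally show "(\<Sum>j<n. y j) \<le> 1" using S(4) by simp
qed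

lemma sum_unit1: "(\<Sum>j<n. unit_vec i j * (y j::real)) = (if i < n then y i else 0)"
proof -
  have "(\<Sum>j<n. unit_vec i j * y j) = (\<Sum>j<n. if i = j then y j else 0)"
    by (rule sum.cong) (auto simp: unit_vec_def)
  then show ?thesis by simp
qed

lemma sum_unit2: "(\<Sum>j<n. (y j::real) * unit_vec j i) = (if i < n then y i else 0)"
proof -
  have "(\<Sum>j<n. y j * unit_vec j i) = (\<Sum>j<n. if i = j then y j else 0)"
    by (rule sum.cong) (auto simp: unit_vec_def)
  then show ?thesis by simp
qed

lemma simplex_I:
  assumes "y \<in> rvec n" "\<And>j. 0 \<le> y j" "(\<Sum>j<n. y j) \<le> 1" shows "y \<in> simplex n"
proof -
  define s where "s = (\<Sum>j<n. y j)"
  define E where "E = unit_vec ` {..<n}"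
  define u where "u v = (if v = zv then 1 - s else (\<Sum>j<n. v j * y j))" for v
  have inj: "inj_on unit_vec {..<n}"
  proof (rule inj_onI)
    fix a b assume "unit_vec a = unit_vec b"
    then have "unit_vec a a = unit_vec b a" by simp
    then show "a = b" by (simp add: unit_vec_def split: if_splits)
  qed
  have uz: "unit_vec j \<noteq> zv" for j
  proof
    assume "unit_vec j = zv"
    then have "unit_vec j j = zv j" by simp
    then show False by (simp add: unit_vec_def zv_def)
  qed
  have zE: "zv \<notin> E" using uz by (auto simp: E_def) (metis uz)
  have uE: "u (unit_vec j) = y j" if "j < n" for j
  proof -
    have "unit_vec j \<noteq> zv" by (rule uz)
    moreover have "(\<Sum>j'<n. unit_vec j j' * y j') = y j" using that
      by (simp add: sum_unit1)
    ultimately show ?thesis by (simp add: u_def)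
  qed
  have sumE: "(\<Sum>v\<in>E. g v) = (\<Sum>j<n. g (unit_vec j))" for g :: "(nat\<Rightarrow>real) \<Rightarrow> real"
    unfolding E_def by (rule sum.reindex[OF inj, unfolded comp_def])
  show ?thesis unfolding simplex_def cvx_hull_def
  proof (rule CollectI, intro exI conjI)
    show "finite (insert zv E)" by (simp add: E_def)
    show "insert zv E \<subseteq> insert (\<lambda>_. 0) (unit_vec ` {..<n})" by (auto simp: E_def zv_def)
    show "\<forall>v\<in>insert zv E. 0 \<le> u v"
      using assms(2,3) uE by (auto simp: u_def s_def E_def)
    have fE: "finite E" by (simp add: E_def)
    have "sum u (insert zv E) = u zv + sum u E" using zE fE by simp
    also have "sum u E = (\<Sum>j<n. u (unit_vec j))" by (rule sumE)
    also have "\<dots> = (\<Sum>j<n. y j)" by (rule sum.cong) (simp_all add: uE)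
    finally show "sum u (insert zv E) = 1" by (simp add: u_def s_def)
    show "y = (\<lambda>i. \<Sum>v\<in>insert zv E. u v * v i)"
    proof
      fix i
      have "(\<Sum>v\<in>insert zv E. u v * v i) = u zv * zv i + (\<Sum>v\<in>E. u v * v i)"
        using zE fE by simp
      also have "(\<Sum>v\<in>E. u v * v i) = (\<Sum>j<n. u (unit_vec j) * unit_vec j i)" by (rule sumE)
      also have "\<dots> = (\<Sum>j<n. y j * unit_vec j i)" by (rule sum.cong) (simp_all add: uE)
      finally have "(\<Sum>v\<in>insert zv E. u v * v i) = (\<Sum>j<n. y j * unit_vec j i)"
        by (simp add: zv_def)
      also have "\<dots> = y i" using assms(1) by (simp add: sum_unit2 rvec_def)
      finally show "y i = (\<Sum>v\<in>insert zv E. u v * v i)" by simp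
    qed
  qed
qed


abbreviation HC where "HC m n \<equiv> Hom m n (cube m) (simplex n)"

definition Acf where "Acf F n i = (\<Sum>j<n. coef F i j)"
definition Wcf where "Wcf F n i = (\<Sum>j<n. \<bar>coef F i j\<bar>) + \<bar>Acf F n i\<bar>"

lemma sumF:
  assumes "affine_map m n F" "x \<in> rvec m"
  shows "(\<Sum>j<n. F x j) = (\<Sum>j<n. F zv j) + (\<Sum>i<m. x i * Acf F n i)"
proof -
  have sw: "(\<Sum>j<n. \<Sum>i<m. x i * coef F i j) = (\<Sum>i<m. \<Sum>j<n. x i * coef F i j)"
    by (rule sum.swap)
  show ?thesis using aff_rep[OF assms] sw by (simp add: sum.distrib Acf_def sum_distrib_left)
qed

lemma H2:
  assumes "F \<in> HC m n"
  shows "(\<Sum>i<m. \<bar>coef F i j\<bar>) \<le> F zv j"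
proof -
  have af: "affine_map m n F" and im: "F ` cube m \<subseteq> simplex n" using assms by (auto simp: Hom_def)
  define v where "v = (\<lambda>i. if i < m then (if coef F i j \<ge> 0 then -1 else 1) else (0::real))"
  have vr: "v \<in> rvec m" by (simp add: v_def rvec_def)
  have "v \<in> cube m" by (rule cube_vert[OF vr]) (simp add: v_def)
  then have "0 \<le> F v j" using im simplex_D by blast
  moreover have "F v j = F zv j - (\<Sum>i<m. \<bar>coef F i j\<bar>)"
  proof -
    have "(\<Sum>i<m. v i * coef F i j) = (\<Sum>i<m. - \<bar>coef F i j\<bar>)"
      by (rule sum.cong) (auto simp: v_def)
    then show ?thesis using aff_rep[OF af vr] by (simp add: sum_negf)
  qed
  ultimately show ?thesis by simp
qed

lemma H3:
  assumes "F \<in> HC m n"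
  shows "(\<Sum>j<n. F zv j) + (\<Sum>i<m. \<bar>Acf F n i\<bar>) \<le> 1"
proof -
  have af: "affine_map m n F" and im: "F ` cube m \<subseteq> simplex n" using assms by (auto simp: Hom_def)
  define v where "v = (\<lambda>i. if i < m then (if Acf F n i \<ge> 0 then 1 else -1) else (0::real))"
  have vr: "v \<in> rvec m" by (simp add: v_def rvec_def)
  have "v \<in> cube m" by (rule cube_vert[OF vr]) (simp add: v_def)
  then have "(\<Sum>j<n. F v j) \<le> 1" using im simplex_D by blast
  moreover have "(\<Sum>i<m. v i * Acf F n i) = (\<Sum>i<m. \<bar>Acf F n i\<bar>)"
    by (rule sum.cong) (auto simp: v_def)
  ultimately show ?thesis using sumF[OF af vr] by simp
qed

definition pert where
  "pert m n F i i' l u = (\<lambda>x. if x \<in> rvec m then (\<lambda>j. F x j + (if j < n then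
      l * (\<bar>coef F i j\<bar> + coef F i j * x i) + u * (\<bar>coef F i' j\<bar> + coef F i' j * x i') else 0))
      else zv)"

lemma T_nonneg: "\<bar>x\<bar> \<le> (1::real) \<Longrightarrow> 0 \<le> \<bar>a\<bar> + a * x"
proof -
  assume "\<bar>x\<bar> \<le> 1"
  then have "\<bar>a * x\<bar> \<le> \<bar>a\<bar>" by (simp add: abs_mult mult_left_le)
  then show ?thesis by linarith
qed

lemma U_nonneg: "\<bar>x\<bar> \<le> (1::real) \<Longrightarrow> 0 \<le> \<bar>a\<bar> - x * a"
  using T_nonneg[of x "-a"] by (simp add: mult.commute)

lemma sum_two_le:
  fixes T :: "nat \<Rightarrow> real"
  assumes "i < m" "i' < m" "i \<noteq> i'" "\<And>k. 0 \<le> T k"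
  shows "T i + T i' \<le> (\<Sum>k<m. T k)"
proof -
  have "(\<Sum>k\<in>{i,i'}. T k) \<le> (\<Sum>k<m. T k)"
    by (rule sum_mono2) (use assms in auto)
  then show ?thesis using assms(3) by simp
qed

lemma pert_Hom:
  assumes F: "F \<in> HC m n" and ii: "i < m" "i' < m" "i \<noteq> i'"
    and lu: "\<bar>l\<bar> \<le> 1" "\<bar>u\<bar> \<le> 1" "l * Wcf F n i + u * Wcf F n i' = 0"
  shows "pert m n F i i' l u \<in> HC m n"
proof -
  have af: "affine_map m n F" and im: "F ` cube m \<subseteq> simplex n" using F by (auto simp: Hom_def)
  let ?G = "pert m n F i i' l u"
  have aG: "affine_map m n ?G"
    unfolding affine_map_def
  proof (intro conjI ballI allI impI)
    fix x assume x: "x \<in> rvec m"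
    then have "F x \<in> rvec n" using af by (simp add: aff_in)
    then show "?G x \<in> rvec n" using x by (simp add: pert_def rvec_def)
  next
    fix x assume "x \<notin> rvec m" then show "?G x = (\<lambda>_. 0)" by (simp add: pert_def zv_def)
  next
    fix x y t assume x: "x \<in> rvec m" and y: "y \<in> rvec m"
    have c: "(\<lambda>i. (1 - t) * x i + t * y i) \<in> rvec m" using x y by (simp add: rvec_def)
    have Fc: "F (\<lambda>i. (1 - t) * x i + t * y i) = (\<lambda>j. (1 - t) * F x j + t * F y j)"
      by (rule aff_comb[OF af x y])
    show "?G (\<lambda>i. (1 - t) * x i + t * y i) = (\<lambda>j. (1 - t) * ?G x j + t * ?G y j)"
      unfolding pert_def Fc using x y c by (intro ext) (simp add: algebra_simps)
  qed
  have "?G x \<in> simplex n" if xc: "x \<in> cube m" for x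
  proof -
    have xr: "x \<in> rvec m" and xb: "\<And>k. \<bar>x k\<bar> \<le> 1" using cube_mem[OF xc] by auto
    have Fr: "F x \<in> rvec n" using af xr by (simp add: aff_in)
    have Gx: "?G x = (\<lambda>j. F x j + (if j < n then
      l * (\<bar>coef F i j\<bar> + coef F i j * x i) + u * (\<bar>coef F i' j\<bar> + coef F i' j * x i') else 0))"
      using xr by (simp add: pert_def)
    show ?thesis
    proof (rule simplex_I)
      show "?G x \<in> rvec n" using Fr by (simp add: Gx rvec_def)
    next
      fix j
      show "0 \<le> ?G x j"
      proof (cases "j < n")
        case False then show ?thesis using Fr by (simp add: Gx rvec_def)
      next
        case True
        define T where "T k = \<bar>coef F k j\<bar> + coef F k j * x k" for k
        have Tn: "0 \<le> T k" for k unfolding T_def by (rule T_nonneg[OF xb])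
        have "F x j = F zv j + (\<Sum>k<m. x k * coef F k j)" using aff_rep[OF af xr] by simp
        also have "\<dots> = (F zv j - (\<Sum>k<m. \<bar>coef F k j\<bar>)) + (\<Sum>k<m. T k)"
          by (simp add: T_def sum.distrib algebra_simps)
        finally have Fx: "F x j = (F zv j - (\<Sum>k<m. \<bar>coef F k j\<bar>)) + (\<Sum>k<m. T k)" .
        have h2: "(\<Sum>k<m. \<bar>coef F k j\<bar>) \<le> F zv j" by (rule H2[OF F])
        have st: "T i + T i' \<le> (\<Sum>k<m. T k)" by (rule sum_two_le[OF ii]) (rule Tn)
        have p1: "0 \<le> (1 + l) * T i" using lu Tn by simp
        have p2: "0 \<le> (1 + u) * T i'" using lu Tn by simp
        have "?G x j = F x j + l * T i + u * T i'" using True by (simp add: Gx T_def)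
        then show ?thesis using Fx h2 st p1 p2 by (simp add: algebra_simps)
      qed
    next
      define A where "A = Acf F n"
      define S where "S k = (\<Sum>j<n. \<bar>coef F k j\<bar>)" for k
      define U where "U k = \<bar>A k\<bar> - x k * A k" for k
      have Un: "0 \<le> U k" for k unfolding U_def by (rule U_nonneg[OF xb])
      have "(\<Sum>j<n. ?G x j) = (\<Sum>j<n. F x j) + (\<Sum>j<n.
          l * (\<bar>coef F i j\<bar> + coef F i j * x i) + u * (\<bar>coef F i' j\<bar> + coef F i' j * x i'))"
        by (simp add: Gx sum.distrib)
      also have "\<dots> = (\<Sum>j<n. F x j) + l * (S i + x i * A i) + u * (S i' + x i' * A i')"
        by (simp add: sum.distrib sum_distrib_left S_def A_def Acf_def algebra_simps)
      finally have sG: "(\<Sum>j<n. ?G x j) = (\<Sum>j<n. F x j) + l * (S i + x i * A i) + u * (S i' + x i' * A i')" .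
      have sF: "(\<Sum>j<n. F x j) = (\<Sum>j<n. F zv j) + (\<Sum>k<m. x k * A k)"
        using sumF[OF af xr] by (simp add: A_def)
      have sU: "(\<Sum>k<m. x k * A k) = (\<Sum>k<m. \<bar>A k\<bar>) - (\<Sum>k<m. U k)"
        by (simp add: U_def sum_subtractf)
      have h3: "(\<Sum>j<n. F zv j) + (\<Sum>k<m. \<bar>A k\<bar>) \<le> 1" using H3[OF F] by (simp add: A_def)
      have st: "U i + U i' \<le> (\<Sum>k<m. U k)" by (rule sum_two_le[OF ii]) (rule Un)
      have p1: "0 \<le> (1 + l) * U i" using lu Un by simp
      have p2: "0 \<le> (1 + u) * U i'" using lu Un by simp
      have w: "l * (S i + \<bar>A i\<bar>) + u * (S i' + \<bar>A i'\<bar>) = 0"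
        using lu(3) by (simp add: Wcf_def S_def A_def)
      have e: "l * (S i + x i * A i) + u * (S i' + x i' * A i') = - l * U i - u * U i'"
        using w by (simp add: U_def algebra_simps)
      show "(\<Sum>j<n. ?G x j) \<le> 1"
        using sG sF sU h3 st p1 p2 e by (simp add: algebra_simps)
    qed
  qed
  then show ?thesis using aG by (auto simp: Hom_def)
qed


lemma vert_one:
  assumes V: "F \<in> vert (HC m n)" and ii: "i < m" "i' < m" "i \<noteq> i'"
  shows "(\<forall>j<n. coef F i j = 0) \<or> (\<forall>j<n. coef F i' j = 0)"
proof (rule ccontr)
  assume "\<not> ?thesis"
  then obtain j1 j2 where j1: "j1 < n" "coef F i j1 \<noteq> 0" and j2: "j2 < n" "coef F i' j2 \<noteq> 0"
    by blast
  have F: "F \<in> HC m n" using V by (simp add: vert_def)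
  have af: "affine_map m n F" using F by (simp add: Hom_def)
  have Wp: "0 < Wcf F n k" if "jj < n" "coef F k jj \<noteq> 0" for k jj
  proof -
    have "\<bar>coef F k jj\<bar> \<le> (\<Sum>j<n. \<bar>coef F k j\<bar>)" by (rule member_le_sum) (use that in auto)
    then show ?thesis using that by (simp add: Wcf_def)
  qed
  define Wi where "Wi = Wcf F n i"
  define Wi' where "Wi' = Wcf F n i'"
  have p1: "0 < Wi" using Wp[OF j1] by (simp add: Wi_def)
  have p2: "0 < Wi'" using Wp[OF j2] by (simp add: Wi'_def)
  define l where "l = Wi' / (Wi + Wi')"
  define u where "u = - Wi / (Wi + Wi')"
  have l1: "\<bar>l\<bar> \<le> 1" using p1 p2 by (simp add: l_def abs_div_pos)
  have u1: "\<bar>u\<bar> \<le> 1" using p1 p2 by (simp add: u_def abs_div_pos)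
  have lu0: "l * Wi + u * Wi' = 0" using p1 p2 by (simp add: l_def u_def field_simps)
  have u0: "u \<noteq> 0" using p1 p2 by (simp add: u_def)
  define G where "G = pert m n F i i' l u"
  define K where "K = pert m n F i i' (-l) (-u)"
  have G: "G \<in> HC m n" unfolding G_def
    by (rule pert_Hom[OF F ii l1 u1]) (use lu0 in \<open>simp add: Wi_def Wi'_def\<close>)
  have K: "K \<in> HC m n" unfolding K_def
    by (rule pert_Hom[OF F ii]) (use lu0 l1 u1 in \<open>simp_all add: Wi_def Wi'_def\<close>)
  have mid: "F = (\<lambda>x j. (1 - 1/2) * G x j + 1/2 * K x j)"
  proof (rule ext)
    fix x
    show "F x = (\<lambda>j. (1 - 1/2) * G x j + 1/2 * K x j)"
    proof (cases "x \<in> rvec m")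
      case True
      show ?thesis
      proof
        fix j
        show "F x j = (1 - 1/2) * G x j + 1/2 * K x j"
          using True by (cases "j < n") (simp_all add: G_def K_def pert_def field_simps)
      qed
    next
      case False then show ?thesis using af
        by (simp add: G_def K_def pert_def aff_out zv_def)
    qed
  qed
  have GK: "G \<noteq> K"
  proof
    assume "G = K"
    define x1 where "x1 = unit_vec i'"
    have x1: "x1 \<in> rvec m" using ii by (simp add: x1_def unit_rvec)
    have "G x1 j2 = K x1 j2" "G zv j2 = K zv j2" using \<open>G = K\<close> by auto
    then have "l * (\<bar>coef F i j2\<bar> + coef F i j2 * x1 i) + u * (\<bar>coef F i' j2\<bar> + coef F i' j2 * x1 i') = 0"
       "l * (\<bar>coef F i j2\<bar> + coef F i j2 * zv i) + u * (\<bar>coef F i' j2\<bar> + coef F i' j2 * zv i') = 0"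
      using x1 j2 by (auto simp: G_def K_def pert_def)
    moreover have "x1 i = 0" "x1 i' = 1" "zv i = 0" "zv i' = 0" using ii
      by (auto simp: x1_def unit_vec_def zv_def)
    ultimately have "u * coef F i' j2 = 0" by (simp add: algebra_simps)
    then show False using u0 j2 by simp
  qed
  have "\<exists>G\<in>HC m n. \<exists>K\<in>HC m n. \<exists>u::real. G \<noteq> K \<and> 0 < u \<and> u < 1 \<and>
          F = (\<lambda>x i. (1 - u) * G x i + u * K x i)"
  proof (intro bexI exI)
    show "G \<noteq> K \<and> 0 < (1/2::real) \<and> (1/2::real) < 1 \<and> F = (\<lambda>x i. (1 - 1/2) * G x i + 1/2 * K x i)"
      using GK mid by simp
  qed (use G K in auto)
  then show False using V unfolding vert_def by blast
qed

lemma aff_dim_le1: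
  assumes ne: "y0 \<in> S" and L: "\<forall>y\<in>S. \<exists>t. y = (\<lambda>j. p j + t * w j)"
  shows "aff_dimension S \<le> 1"
proof -
  define P where "P k = (\<exists>q. (\<forall>j\<le>k. q j \<in> S) \<and> aff_indep k q)" for k
  have P0: "P 0" unfolding P_def aff_indep_def
    by (rule exI[of _ "\<lambda>_. y0"]) (use ne in auto)
  have Pb: "k \<le> 1" if "P k" for k
  proof (rule ccontr)
    assume "\<not> k \<le> 1"
    then have k2: "2 \<le> k" by simp
    obtain q where q: "\<forall>j\<le>k. q j \<in> S" "aff_indep k q" using \<open>P k\<close> P_def by blast
    have "\<exists>t. q j = (\<lambda>i. p i + t * w i)" if "j \<le> 2" for j using q(1) L that k2 by auto
    then obtain t where t: "\<And>j. j \<le> 2 \<Longrightarrow> q j = (\<lambda>i. p i + t j * w i)" by metis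
    define c0 c1 c2 where "c0 = (if t 0 = t 1 then 1 else t 1 - t 2)"
      and "c1 = (if t 0 = t 1 then -1 else t 2 - t 0)"
      and "c2 = (if t 0 = t 1 then 0 else t 0 - t 1)"
    define c where "c j = (if j = 0 then c0 else if j = 1 then c1 else if j = 2 then c2 else 0)" for j :: nat
    have red: "(\<Sum>j\<le>k. g j) = (\<Sum>j\<le>2. g j)" if "\<And>j. 2 < j \<Longrightarrow> g j = 0" for g :: "nat \<Rightarrow> real"
      by (rule sum.mono_neutral_right) (use k2 that in auto)
    have s2: "(\<Sum>j\<le>2. g j) = g 0 + g 1 + g (2::nat)" for g :: "nat \<Rightarrow> real"
      by (simp add: numeral_2_eq_2)
    have "(\<Sum>j\<le>k. c j) = 0"
      by (subst red) (auto simp: c_def s2 c0_def c1_def c2_def)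
    moreover have "(\<lambda>i. \<Sum>j\<le>k. c j * q j i) = (\<lambda>_. 0)"
    proof
      fix i
      have "(\<Sum>j\<le>k. c j * q j i) = c0 * q 0 i + c1 * q 1 i + c2 * q 2 i"
        by (subst red) (auto simp: c_def s2)
      also have "\<dots> = 0" by (simp add: t c0_def c1_def c2_def algebra_simps)
      finally show "(\<Sum>j\<le>k. c j * q j i) = 0" .
    qed
    ultimately have "\<forall>j\<le>k. c j = 0" using q(2) unfolding aff_indep_def by blast
    then have "c 0 = 0" "c 2 = 0" using k2 by auto
    then show False by (auto simp: c_def c0_def c2_def split: if_splits)
  qed
  have "P (Greatest P)" by (rule GreatestI_nat[where P=P, OF P0]) (use Pb in blast)
  then have "Greatest P \<le> 1" by (rule Pb)
  moreover have "aff_dimension S = Greatest P" unfolding aff_dimension_def P_def by simp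
  ultimately show ?thesis by simp
qed

theorem theorem4p1:
  fixes m n :: nat
  shows "vert (Hom m n (cube m) (simplex n))
           = {F \<in> vert (Hom m n (cube m) (simplex n)). map_rank (cube m) F = 0}
             \<union> {F \<in> vert (Hom m n (cube m) (simplex n)). map_rank (cube m) F = 1}"
proof -
  have "map_rank (cube m) F \<le> 1" if V: "F \<in> vert (HC m n)" for F
  proof -
    have af: "affine_map m n F" using V by (simp add: vert_def Hom_def)
    have "\<exists>i0. \<forall>i<m. i \<noteq> i0 \<longrightarrow> (\<forall>j. coef F i j = 0)"
    proof (cases "\<exists>i0<m. \<exists>j<n. coef F i0 j \<noteq> 0")
      case True
      then obtain i0 j0 where i0: "i0 < m" "j0 < n" "coef F i0 j0 \<noteq> 0" by blast
      have "\<forall>j. coef F i j = 0" if "i < m" "i \<noteq> i0" for i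
      proof
        fix j
        show "coef F i j = 0"
        proof (cases "j < n")
          case True then show ?thesis using vert_one[OF V that(1) i0(1) that(2)] i0 by auto
        next
          case False then show ?thesis using coef_out[OF af that(1)] by simp
        qed
      qed
      then show ?thesis by blast
    next
      case False
      have "\<forall>j. coef F i j = 0" if "i < m" for i
        using False coef_out[OF af that] that by (metis not_le)
      then show ?thesis by blast
    qed
    then obtain i0 where i0: "\<And>i j. i < m \<Longrightarrow> i \<noteq> i0 \<Longrightarrow> coef F i j = 0" by blast
    have line: "\<forall>y\<in>F ` cube m. \<exists>t. y = (\<lambda>j. F zv j + t * coef F i0 j)"
    proof
      fix y assume "y \<in> F ` cube m"
      then obtain x where x: "x \<in> cube m" "y = F x" by blast
      have xr: "x \<in> rvec m" using cube_mem[OF x(1)] by simp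
      have "(\<Sum>i<m. x i * coef F i j) = x i0 * coef F i0 j" for j
      proof (cases "i0 < m")
        case True
        have "(\<Sum>i<m. x i * coef F i j) = (\<Sum>i<m. if i = i0 then x i0 * coef F i0 j else 0)"
          by (rule sum.cong) (auto simp: i0)
        then show ?thesis using True by simp
      next
        case False
        then have "x i0 = 0" using xr by (simp add: rvec_def)
        moreover have "(\<Sum>i<m. x i * coef F i j) = 0"
          by (rule sum.neutral) (use False i0 in auto)
        ultimately show ?thesis by simp
      qed
      then show "\<exists>t. y = (\<lambda>j. F zv j + t * coef F i0 j)"
        using aff_rep[OF af xr] x(2) by auto
    qed
    define x1 :: "nat \<Rightarrow> real" where "x1 = (\<lambda>i. if i < m then 1 else 0)"
    have "x1 \<in> cube m" by (rule cube_vert) (auto simp: x1_def rvec_def)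
    then have "F x1 \<in> F ` cube m" by blast
    then show ?thesis unfolding map_rank_def by (rule aff_dim_le1[OF _ line])
  qed
  then show ?thesis by force
qed

end
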